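(* Let $f:\mathbb{F}_q^n\to\mathbb{F}_q^n$ be a monomial dynamical system. Then $f$ is a fixed point system if and only if both $T(f):\mathbb{F}_2^n\to\mathbb{F}_2^n$ and $L(f):(\mathbb{Z}/(q-1))^n\to(\mathbb{Z}/(q-1))^n$ are fixed point systems.
   Context: A monomial system $f=(f_1,\dots,f_n):\mathbb{F}_q^n\to\mathbb{F}_q^n$ has $f_i=x_1^{a_{i1}}\cdots x_n^{a_{in}}$ with exponent matrix $A=(a_{ij})$, $a_{ij}\in\mathbb{Z}_{\ge0}$. $T(f)=(g_1,\dots,g_n)$ is the Boolean monomial system with $g_i=x_1^{v_{i1}}\cdots x_n^{v_{in}}$, where $v_{ij}=1$ if $a_{ij}\ne0$ and $v_{ij}=0$ otherwise. $L(f)$ is the linear map $\mathbf s\mapsto A\mathbf s$ over the ring $\mathbb{Z}/(q-1)$. A map $h:X\to X$ on a finite set is a fixed point system if every periodic point is fixed: $h^k(x)=x$ for some $k\ge1$ implies $h(x)=x$. *)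

theory Defs
  imports "HOL-Analysis.Analysis" "HOL-Library.Z2"
begin

definition fixed_point_system_on :: "'x set \<Rightarrow> ('x \<Rightarrow> 'x) \<Rightarrow> bool" where
  "fixed_point_system_on X h \<longleftrightarrow>
     (\<forall>x\<in>X. (\<exists>k\<ge>1. (h ^^ k) x = x) \<longrightarrow> h x = x)"

text \<open>Monomial system with exponent matrix A: f_i(x) = prod_j x_j^(A i j) (with 0^0 = 1).\<close>
definition monomial_system :: "('n::finite \<Rightarrow> 'n \<Rightarrow> nat) \<Rightarrow> 'a::comm_ring_1 ^ 'n \<Rightarrow> 'a ^ 'n" where
  "monomial_system A x = (\<chi> i. \<Prod>j\<in>UNIV. (x $ j) ^ (A i j))"

text \<open>T(f): Boolean monomial system over F_2 (type bit) with the support matrix of A.\<close>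
definition T_sys :: "('n::finite \<Rightarrow> 'n \<Rightarrow> nat) \<Rightarrow> bit ^ 'n \<Rightarrow> bit ^ 'n" where
  "T_sys A = monomial_system (\<lambda>i j. if A i j \<noteq> 0 then 1 else 0)"

text \<open>(Z/m)^n represented by the vectors with entries in {0..<m}.\<close>
definition Zmod_vecs :: "nat \<Rightarrow> (nat ^ 'n::finite) set" where
  "Zmod_vecs m = {s. \<forall>i. s $ i < m}"

definition L_sys :: "nat \<Rightarrow> ('n::finite \<Rightarrow> 'n \<Rightarrow> nat) \<Rightarrow> nat ^ 'n \<Rightarrow> nat ^ 'n" where
  "L_sys m A s = (\<chi> i. (\<Sum>j\<in>UNIV. A i j * s $ j) mod m)"

end

theory Submission imports Defs "HOL-Algebra.Multiplicative_Group" begin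

definition ringT :: "'a::field ring" where
  "ringT = \<lparr> carrier = UNIV, monoid.mult = (\<lambda>x y. x * y), one = 1, ring.zero = 0, add = (\<lambda> x y. x + y) \<rparr>"

lemma ringT_field: "field (ringT :: 'a::field ring)"
proof -
  have "\<exists>y. x + y = 0" for x :: 'a
    using add.right_inverse by blast
  moreover have "x \<noteq> 0 \<Longrightarrow> \<exists>y. x * y = 1" for x :: 'a
    by (rule exI[of _ "inverse x"]) auto
  ultimately show ?thesis
    unfolding ringT_def using add.right_inverse
    by unfold_locales (auto simp:algebra_simps Units_def)
qed

lemma ringT_pow: "x [^]\<^bsub>(ringT :: 'a::field ring)\<^esub> (n::nat) = x ^ n"
proof -
  interpret field "ringT :: 'a ring" by (rule ringT_field)
  show ?thesis by (induction n) (auto simp: ringT_def)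
qed

lemma gen_exists:
  "\<exists>g::'a::{field,finite}. g \<noteq> 0 \<and> g ^ (CARD('a) - 1) = 1 \<and> (\<forall>y. y \<noteq> 0 \<longrightarrow> (\<exists>i. y = g ^ i))"
proof -
  interpret F: field "ringT :: 'a ring" by (rule ringT_field)
  have fin: "finite (carrier (ringT :: 'a ring))" by simp
  obtain a where a: "a \<in> carrier (mult_of (ringT :: 'a ring))"
    "carrier (mult_of (ringT :: 'a ring)) = {a[^]\<^bsub>(ringT :: 'a ring)\<^esub> i | i::nat . i \<in> UNIV}"
    using F.finite_field_mult_group_has_gen[OF fin] by blast
  interpret G: group "mult_of (ringT :: 'a ring)" by (rule F.field_mult_group)
  have "a [^]\<^bsub>mult_of (ringT :: 'a ring)\<^esub> order (mult_of (ringT :: 'a ring)) = \<one>\<^bsub>mult_of (ringT :: 'a ring)\<^esub>"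
    using G.pow_order_eq_1[OF a(1)] .
  moreover have "order (mult_of (ringT :: 'a ring)) = CARD('a) - 1"
    using F.order_mult_of[OF fin] by (simp add: order_def ringT_def)
  ultimately have "a ^ (CARD('a) - 1) = 1"
    by (simp add: nat_pow_mult_of ringT_pow) (simp add: ringT_def)
  moreover have "a \<noteq> 0" using a(1) by (simp add: ringT_def)
  moreover have "\<forall>y. y \<noteq> 0 \<longrightarrow> (\<exists>i. y = a ^ i)"
  proof (intro allI impI)
    fix y :: 'a assume "y \<noteq> 0"
    then have "y \<in> carrier (mult_of (ringT :: 'a ring))" by (simp add: ringT_def)
    then show "\<exists>i. y = a ^ i" using a(2) by (auto simp: ringT_pow)
  qed
  ultimately show ?thesis by blast
qed

lemma card_ge2: "CARD('a::{field,finite}) \<ge> 2"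
proof -
  have "card {0::'a, 1} \<le> CARD('a)" by (rule card_mono) auto
  then show ?thesis by simp
qed

lemma powmod: assumes "(g::'a::comm_ring_1) ^ m = 1" shows "g ^ (n mod m) = g ^ n"
proof -
  have "g ^ n = g ^ (m * (n div m) + n mod m)" by simp
  also have "\<dots> = g ^ (n mod m)" by (simp only: power_add power_mult assms) simp
  finally show ?thesis by simp
qed

lemma gen2:
  obtains g :: "'a::{field,finite}" where "g \<noteq> 0" "g ^ (CARD('a) - 1) = 1"
    "\<And>y. y \<noteq> 0 \<Longrightarrow> \<exists>i<CARD('a) - 1. y = g ^ i"
    "inj_on (\<lambda>i. g ^ i) {..<CARD('a) - 1}"
proof -
  let ?m = "CARD('a) - 1"
  obtain g :: 'a where g: "g \<noteq> 0" "g ^ ?m = 1" "\<And>y. y \<noteq> 0 \<Longrightarrow> \<exists>i. y = g ^ i"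
    using gen_exists by blast
  have mpos: "?m > 0" using card_ge2[where 'a='a] by simp
  have s: "\<exists>i<?m. y = g ^ i" if y0: "y \<noteq> 0" for y
  proof -
    obtain i where "y = g ^ i" using g(3) y0 by blast
    then have "y = g ^ (i mod ?m)" using powmod[OF g(2)] by simp
    then show ?thesis using mpos mod_less_divisor by blast
  qed
  have img: "(\<lambda>i. g ^ i) ` {..<?m} = UNIV - {0}"
    using s g(1) by fastforce
  have "card ((\<lambda>i. g ^ i) ` {..<?m}) = card {..<?m}"
    unfolding img by (simp add: card_Diff_singleton)
  then have "inj_on (\<lambda>i. g ^ i) {..<?m}" by (rule eq_card_imp_inj_on[rotated]) simp
  then show ?thesis using that g s by blast
qed

lemma iter_comm:
  assumes "\<forall>x\<in>X. k x \<in> X" "\<forall>x\<in>X. h (\<phi> x) = \<phi> (k x)" "x \<in> X"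
  shows "(h ^^ n) (\<phi> x) = \<phi> ((k ^^ n) x) \<and> (k ^^ n) x \<in> X"
  by (induction n) (use assms in auto)

lemma transfer1:
  assumes "inj_on \<phi> X" "\<forall>x\<in>X. \<phi> x \<in> Y" "\<forall>x\<in>X. k x \<in> X" "\<forall>x\<in>X. h (\<phi> x) = \<phi> (k x)"
    "fixed_point_system_on Y h"
  shows "fixed_point_system_on X k"
  unfolding fixed_point_system_on_def
proof (intro ballI impI)
  fix x assume x: "x \<in> X" and "\<exists>n\<ge>1. (k ^^ n) x = x"
  then obtain n where n: "n \<ge> 1" "(k ^^ n) x = x" by blast
  have "(h ^^ n) (\<phi> x) = \<phi> x" using iter_comm[OF assms(3,4) x, of n] n by simp
  then have "h (\<phi> x) = \<phi> x" using assms(5) assms(2) x n(1)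
    unfolding fixed_point_system_on_def by blast
  then have "\<phi> (k x) = \<phi> x" using assms(4) x by simp
  then show "k x = x" using assms(1,3) x by (meson inj_onD)
qed

lemma transfer2:
  assumes "inj_on \<phi> X" "\<phi> ` X = Y" "\<forall>x\<in>X. k x \<in> X" "\<forall>x\<in>X. h (\<phi> x) = \<phi> (k x)"
    "fixed_point_system_on X k"
  shows "fixed_point_system_on Y h"
  unfolding fixed_point_system_on_def
proof (intro ballI impI)
  fix y assume "y \<in> Y" and "\<exists>n\<ge>1. (h ^^ n) y = y"
  then obtain n x where n: "n \<ge> 1" "(h ^^ n) y = y" and x: "x \<in> X" "y = \<phi> x"
    using assms(2) by blast
  have it: "(h ^^ n) (\<phi> x) = \<phi> ((k ^^ n) x)" "(k ^^ n) x \<in> X"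
    using iter_comm[OF assms(3,4) x(1), of n] by auto
  then have "(k ^^ n) x = x" using n x assms(1) by (metis inj_onD)
  then have "k x = x" using assms(5) x n(1) unfolding fixed_point_system_on_def by blast
  then show "h y = y" using assms(4) x by simp
qed

lemma periodic_exists:
  assumes "finite Y" "y0 \<in> Y" "\<forall>y\<in>Y. h y \<in> Y"
  shows "\<exists>y\<in>Y. \<exists>k\<ge>1. (h ^^ k) y = y"
proof -
  define s where "s n = (h ^^ n) y0" for n
  have sY: "s n \<in> Y" for n unfolding s_def by (induction n) (use assms in auto)
  have "\<not> inj s"
  proof
    assume "inj s"
    then have "infinite (range s)" by (rule range_inj_infinite)
    moreover have "range s \<subseteq> Y" using sY by auto
    ultimately show False using assms(1) finite_subset by blast
  qed
  then obtain a b where ab: "a \<noteq> b" "s a = s b" unfolding inj_def by blast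
  have "\<exists>a b. a < b \<and> s a = s b"
    using ab by (metis linorder_neqE_nat)
  then obtain a b where ab2: "a < b" "s a = s b" by blast
  have "(h ^^ (b - a)) (s a) = s b"
    unfolding s_def using ab2(1) by (metis funpow_add comp_apply le_add_diff_inverse2 less_imp_le_nat)
  then show ?thesis using ab2 sY[of a] by (intro bexI[of _ "s a"] exI[of _ "b - a"]) auto
qed

lemma mono_nth: "monomial_system A x $ i = (\<Prod>j\<in>UNIV. (x $ j) ^ (A i j))"
  by (simp add: monomial_system_def)

lemma mono_zero:
  "(monomial_system A (x :: 'a::field ^ 'n) $ i = 0) \<longleftrightarrow> (\<exists>j. A i j \<noteq> 0 \<and> x $ j = 0)"
  by (auto simp: mono_nth prod_zero_iff power_eq_0_iff)

lemma T_zero: "(T_sys A b $ i = 0) \<longleftrightarrow> (\<exists>j. A i j \<noteq> 0 \<and> b $ j = 0)"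
  unfolding T_sys_def by (auto simp: mono_zero)

definition sig :: "'a::field ^ 'n \<Rightarrow> bit ^ 'n" where
  "sig x = (\<chi> j. if x $ j = 0 then 0 else 1)"

definition bet :: "bit ^ 'n \<Rightarrow> 'a::field ^ 'n" where
  "bet b = (\<chi> j. if b $ j = 0 then 0 else 1)"

lemma sig_comm: "sig (monomial_system A x) = T_sys A (sig (x :: 'a::field ^ 'n::finite))"
proof -
  have "sig (monomial_system A x) $ i = T_sys A (sig x) $ i" for i
  proof (cases "monomial_system A x $ i = 0")
    case True
    then have "T_sys A (sig x) $ i = 0" unfolding T_zero using mono_zero[of A x i]
      by (auto simp: sig_def)
    then show ?thesis using True by (simp add: sig_def)
  next
    case False
    then have "T_sys A (sig x) $ i \<noteq> 0" unfolding T_zero using mono_zero[of A x i]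
      by (auto simp: sig_def)
    then show ?thesis using False by (simp add: sig_def)
  qed
  then show ?thesis by (simp add: vec_eq_iff)
qed

lemma bet_inj: "inj (bet :: bit ^ 'n \<Rightarrow> 'a::field ^ 'n)"
proof
  fix b c :: "bit ^ 'n" assume "(bet b :: 'a ^ 'n) = bet c"
  then have "\<forall>j. (if b $ j = 0 then 0 else 1 :: 'a) = (if c $ j = 0 then 0 else 1)"
    by (simp add: bet_def vec_eq_iff)
  then have "\<forall>j. b $ j = c $ j"
  proof (intro allI)
    fix j assume "\<forall>j. (if b $ j = 0 then 0 else 1 :: 'a) = (if c $ j = 0 then 0 else 1)"
    then have "(if b $ j = 0 then 0 else 1 :: 'a) = (if c $ j = 0 then 0 else 1)" by blast
    then show "b $ j = c $ j" by (cases "b $ j = 0"; cases "c $ j = 0") auto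
  qed
  then show "b = c" by (simp add: vec_eq_iff)
qed

lemma bet_comm: "monomial_system A (bet b :: 'a::field ^ 'n::finite) = bet (T_sys A b)"
proof -
  have "monomial_system A (bet b :: 'a ^ 'n) $ i = bet (T_sys A b) $ i" for i
  proof (cases "T_sys A b $ i = 0")
    case True
    then obtain j where "A i j \<noteq> 0" "b $ j = 0" using T_zero[of A b i] by blast
    then have "monomial_system A (bet b :: 'a ^ 'n) $ i = 0" unfolding mono_zero
      by (intro exI[of _ j]) (simp add: bet_def)
    then show ?thesis using True by (simp add: bet_def)
  next
    case False
    then have nz: "\<forall>j. A i j \<noteq> 0 \<longrightarrow> b $ j \<noteq> 0" using T_zero[of A b i] by blast
    have "(bet b :: 'a ^ 'n) $ j ^ A i j = 1" for j
    proof (cases "A i j = 0")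
      case False
      then have "b $ j \<noteq> 0" using nz by blast
      then show ?thesis by (simp add: bet_def)
    qed simp
    then have "monomial_system A (bet b :: 'a ^ 'n) $ i = 1"
      unfolding mono_nth by (intro prod.neutral) blast
    then show ?thesis using False by (simp add: bet_def)
  qed
  then show ?thesis by (simp add: vec_eq_iff)
qed

definition phi :: "'a::comm_ring_1 \<Rightarrow> nat ^ 'n \<Rightarrow> 'a ^ 'n" where
  "phi g e = (\<chi> j. g ^ (e $ j))"

lemma L_in: "m > 0 \<Longrightarrow> s \<in> Zmod_vecs m \<Longrightarrow> L_sys m A s \<in> Zmod_vecs m"
  by (simp add: Zmod_vecs_def L_sys_def)

lemma phi_comm:
  assumes "(g::'a::field) ^ m = 1"
  shows "monomial_system A (phi g e) = phi g (L_sys m A (e :: nat ^ 'n::finite))"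
proof -
  have "monomial_system A (phi g e) $ i = phi g (L_sys m A e) $ i" for i
  proof -
    have "monomial_system A (phi g e) $ i = (\<Prod>j\<in>UNIV. g ^ (A i j * e $ j))"
      by (simp add: mono_nth phi_def power_mult[symmetric] mult.commute)
    also have "\<dots> = g ^ (\<Sum>j\<in>UNIV. A i j * e $ j)" by (simp add: power_sum)
    also have "\<dots> = g ^ ((\<Sum>j\<in>UNIV. A i j * e $ j) mod m)" using powmod[OF assms] by simp
    finally show ?thesis by (simp add: phi_def L_sys_def)
  qed
  then show ?thesis by (simp add: vec_eq_iff)
qed

lemma phi_inj:
  assumes "inj_on (\<lambda>i. (g::'a::field) ^ i) {..<m}"
  shows "inj_on (phi g :: nat ^ 'n::finite \<Rightarrow> 'a ^ 'n) (Zmod_vecs m)"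
proof
  fix e d :: "nat ^ 'n" assume "e \<in> Zmod_vecs m" "d \<in> Zmod_vecs m" "phi g e = phi g d"
  then have "\<forall>j. g ^ (e $ j) = g ^ (d $ j) \<and> e $ j < m \<and> d $ j < m"
    by (simp add: phi_def vec_eq_iff Zmod_vecs_def)
  then have "\<forall>j. e $ j = d $ j" using assms by (meson inj_onD lessThan_iff)
  then show "e = d" by (simp add: vec_eq_iff)
qed

lemma phi_img:
  assumes "g \<noteq> 0" "\<And>y. y \<noteq> 0 \<Longrightarrow> \<exists>i<m. y = (g::'a::field) ^ i"
  shows "(phi g :: nat ^ 'n::finite \<Rightarrow> 'a ^ 'n) ` (Zmod_vecs m) = {y. \<forall>j. y $ j \<noteq> 0}"
proof (intro equalityI)
  show "phi g ` Zmod_vecs m \<subseteq> {y. \<forall>j. y $ j \<noteq> 0}" using assms(1) by (auto simp: phi_def)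
next
  show "{y. \<forall>j. y $ j \<noteq> 0} \<subseteq> (phi g :: nat ^ 'n \<Rightarrow> 'a ^ 'n) ` Zmod_vecs m"
  proof (rule subsetI)
    fix y :: "'a ^ 'n" assume "y \<in> {y. \<forall>j. y $ j \<noteq> 0}"
    then have "\<forall>j. \<exists>i. i < m \<and> y $ j = g ^ i" using assms(2) by blast
    then obtain e where e: "\<forall>j. e j < m \<and> y $ j = g ^ e j" by metis
    have "y = phi g (\<chi> j. e j)" using e by (simp add: phi_def vec_eq_iff)
    moreover have "(\<chi> j. e j) \<in> Zmod_vecs m" using e by (simp add: Zmod_vecs_def)
    ultimately show "y \<in> phi g ` Zmod_vecs m" by blast
  qed
qed

lemma torus_fps:
  assumes "fixed_point_system_on (Zmod_vecs (CARD('a) - 1)) (L_sys (CARD('a) - 1) A)"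
  shows "fixed_point_system_on {y. \<forall>j. y $ j \<noteq> 0} (monomial_system A :: ('a::{field,finite}) ^ 'n::finite \<Rightarrow> 'a ^ 'n)"
proof -
  let ?m = "CARD('a) - 1"
  obtain g :: 'a where g: "g \<noteq> 0" "g ^ ?m = 1" "\<And>y. y \<noteq> 0 \<Longrightarrow> \<exists>i<?m. y = g ^ i"
    "inj_on (\<lambda>i. g ^ i) {..<?m}" using gen2[where 'a='a] by blast
  have mpos: "?m > 0" using card_ge2[where 'a='a] by simp
  have hL: "\<forall>x\<in>Zmod_vecs ?m. L_sys ?m A x \<in> Zmod_vecs ?m" using L_in[OF mpos] by blast
  have hC: "\<forall>x\<in>Zmod_vecs ?m. monomial_system A (phi g x) = phi g (L_sys ?m A (x :: nat ^ 'n))"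
    using phi_comm[OF g(2)] by blast
  show ?thesis
    by (rule transfer2[OF phi_inj[OF g(4)] phi_img[OF g(1,3)] hL hC assms])
qed

theorem mainTheorem6:
  fixes A :: "'n::finite \<Rightarrow> 'n \<Rightarrow> nat"
  shows "fixed_point_system_on UNIV (monomial_system A :: ('a::{field,finite}) ^ 'n \<Rightarrow> 'a ^ 'n)
     \<longleftrightarrow> fixed_point_system_on UNIV (T_sys A)
       \<and> fixed_point_system_on (Zmod_vecs (CARD('a) - 1)) (L_sys (CARD('a) - 1) A)"
proof
  let ?m = "CARD('a) - 1"
  let ?f = "monomial_system A :: 'a ^ 'n \<Rightarrow> 'a ^ 'n"
  assume F: "fixed_point_system_on UNIV ?f"
  obtain g :: 'a where g: "g \<noteq> 0" "g ^ ?m = 1" "\<And>y. y \<noteq> 0 \<Longrightarrow> \<exists>i<?m. y = g ^ i"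
    "inj_on (\<lambda>i. g ^ i) {..<?m}" using gen2[where 'a='a] by blast
  have mpos: "?m > 0" using card_ge2[where 'a='a] by simp
  have T1: "fixed_point_system_on UNIV (T_sys A)"
    by (rule transfer1[where \<phi>="bet :: bit ^ 'n \<Rightarrow> 'a ^ 'n", OF _ _ _ _ F])
       (auto simp: bet_inj bet_comm)
  have hL: "\<forall>x\<in>Zmod_vecs ?m. L_sys ?m A x \<in> Zmod_vecs ?m" using L_in[OF mpos] by blast
  have hC: "\<forall>x\<in>Zmod_vecs ?m. ?f (phi g x) = phi g (L_sys ?m A (x :: nat ^ 'n))"
    using phi_comm[OF g(2)] by blast
  have "fixed_point_system_on (Zmod_vecs ?m) (L_sys ?m A)"
    by (rule transfer1[OF phi_inj[OF g(4)] _ hL hC F]) simp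
  with T1 show "fixed_point_system_on UNIV (T_sys A) \<and> fixed_point_system_on (Zmod_vecs ?m) (L_sys ?m A)"
    by blast
next
  let ?m = "CARD('a) - 1"
  let ?f = "monomial_system A :: 'a ^ 'n \<Rightarrow> 'a ^ 'n"
  assume H: "fixed_point_system_on UNIV (T_sys A) \<and> fixed_point_system_on (Zmod_vecs ?m) (L_sys ?m A)"
  have tor: "fixed_point_system_on {y. \<forall>j. y $ j \<noteq> 0} ?f" using torus_fps H by blast
  show "fixed_point_system_on UNIV ?f"
    unfolding fixed_point_system_on_def
  proof (intro ballI impI)
    fix x :: "'a ^ 'n" assume "\<exists>k\<ge>1. (?f ^^ k) x = x"
    then obtain k where k: "k \<ge> 1" "(?f ^^ k) x = x" by blast
    have sc: "\<forall>x\<in>UNIV. T_sys A (sig x) = sig (?f x)" by (simp add: sig_comm)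
    have "(T_sys A ^^ k) (sig x) = sig x"
      using iter_comm[of UNIV ?f "T_sys A" sig x k] sc k(2) by simp
    then have Tfix: "T_sys A (sig x) = sig x"
      using H k(1) unfolding fixed_point_system_on_def by blast
    have supp: "sig ((?f ^^ r) x) = sig x" for r
    proof (induction r)
      case (Suc r)
      then show ?case using sig_comm[of A "(?f ^^ r) x"] Tfix by simp
    qed simp
    have zr: "((?f ^^ r) x $ j = 0) \<longleftrightarrow> (x $ j = 0)" for r j
    proof -
      have "sig ((?f ^^ r) x) $ j = sig x $ j" using supp by simp
      then show ?thesis by (cases "x $ j = 0"; cases "(?f ^^ r) x $ j = 0") (auto simp: sig_def)
    qed
    have key: "?f y $ i = (?f ^^ Suc r) x $ i"
      if y: "\<forall>j. x $ j \<noteq> 0 \<longrightarrow> y $ j = (?f ^^ r) x $ j" and xi: "x $ i \<noteq> 0" for y r i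
    proof -
      have "(?f ^^ Suc r) x $ i \<noteq> 0" using zr xi by blast
      then have "?f ((?f ^^ r) x) $ i \<noteq> 0" by simp
      then have nz: "\<forall>j. A i j \<noteq> 0 \<longrightarrow> (?f ^^ r) x $ j \<noteq> 0"
        using mono_zero[of A "(?f ^^ r) x" i] by blast
      have "(y $ j) ^ A i j = ((?f ^^ r) x $ j) ^ A i j" for j
      proof (cases "A i j = 0")
        case False
        then have "x $ j \<noteq> 0" using nz zr by blast
        then show ?thesis using y by simp
      qed simp
      then show ?thesis by (simp add: mono_nth)
    qed
    define Y0 where "Y0 = {y :: 'a ^ 'n. (\<forall>j. y $ j \<noteq> 0) \<and> (\<exists>r. \<forall>j. x $ j \<noteq> 0 \<longrightarrow> y $ j = (?f ^^ r) x $ j)}"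
    have inv: "\<forall>y\<in>Y0. ?f y \<in> Y0"
    proof
      fix y assume "y \<in> Y0"
      then obtain r where y: "\<forall>j. y $ j \<noteq> 0" "\<forall>j. x $ j \<noteq> 0 \<longrightarrow> y $ j = (?f ^^ r) x $ j"
        unfolding Y0_def by blast
      have "\<forall>j. ?f y $ j \<noteq> 0" using y(1) mono_zero[of A y] by blast
      moreover have "\<forall>j. x $ j \<noteq> 0 \<longrightarrow> ?f y $ j = (?f ^^ Suc r) x $ j" using key[OF y(2)] by blast
      ultimately show "?f y \<in> Y0" unfolding Y0_def by blast
    qed
    define y0 where "y0 = (\<chi> j. if x $ j = 0 then (1::'a) else x $ j)"
    have "y0 \<in> Y0" unfolding Y0_def y0_def
      by (auto intro: exI[of _ 0])
    then obtain y k' where yk: "y \<in> Y0" "k' \<ge> 1" "(?f ^^ k') y = y"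
      using periodic_exists[OF finite_subset[OF subset_UNIV finite] _ inv] by blast
    then obtain r where y: "\<forall>j. y $ j \<noteq> 0" "\<forall>j. x $ j \<noteq> 0 \<longrightarrow> y $ j = (?f ^^ r) x $ j"
      unfolding Y0_def by blast
    have "?f y = y" using tor yk y(1) unfolding fixed_point_system_on_def by blast
    have zfix: "(?f ^^ Suc r) x = (?f ^^ r) x"
    proof -
      have "(?f ^^ Suc r) x $ j = (?f ^^ r) x $ j" for j
      proof (cases "x $ j = 0")
        case True
        then show ?thesis using zr[of "Suc r" j] zr[of r j] by simp
      next
        case False
        then show ?thesis using key[OF y(2) False] y(2) \<open>?f y = y\<close> by simp
      qed
      then show ?thesis by (simp add: vec_eq_iff)
    qed
    define z where "z = (?f ^^ r) x"
    have fz: "?f z = z" using zfix unfolding z_def by simp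
    have zn: "(?f ^^ n) z = z" for n by (induction n) (simp_all add: fz)
    have kt: "(?f ^^ (k * t)) x = x" for t
    proof (induction t)
      case (Suc t)
      have "(?f ^^ (k * Suc t)) x = (?f ^^ k) ((?f ^^ (k * t)) x)"
        by (simp add: funpow_add)
      then show ?case using Suc k(2) by simp
    qed simp
    have "k * r = (k * r - r) + r" using k(1) by (simp add: le_add_diff_inverse2 mult_le_mono1) 
    then have "x = (?f ^^ (k * r - r)) z" using kt[of r] unfolding z_def
      by (metis funpow_add comp_apply)
    then have "x = z" using zn by simp
    then show "?f x = x" using fz by simp
  qed
qed

end
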